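(* Let $e\ge1$ and let $x_0$ be any vertex of $X_{PGL_2(F)}$. The stabiliser $\hat K_{x_0}=\{g\in\hat G^{(e)}: g(x_0)=x_0\}$ acts transitively on the set of ends of $X_{PGL_2(F)}$.
   Context: Let $F$ be a non-archimedean local field with ring of integers $\mathfrak{o}$, uniformizer $\varpi$, and finite residue field of cardinality $q$. $X=X_{PGL_2(F)}$ is the Bruhat–Tits tree of $PGL_2(F)$: its vertices are homothety classes $[L]$ (under $F^\times$) of $\mathfrak{o}$-lattices $L\subset F^2$, and $[L],[L']$ are joined by an edge iff there are representatives with $\varpi L\subsetneq L'\subsetneq L$; it is a $(q+1)$-regular tree. $d$ is the path-length distance on vertices; $\mathrm{Aut}(X)$ is the group of distance-preserving bijections of the vertex set, with the topology of pointwise convergence. $GL_2(F)$ acts on lattices through its linear action on $F^2$, the centre acts trivially, and this gives an embedding $PGL_2(F)\hookrightarrow\mathrm{Aut}(X)$. For an edge $\eta=\{x_1,x_2\}$ and $e\ge1$, $B(\eta,e)=\{y: \min(d(y,x_1),d(y,x_2))\le e\}$. Define $\hat G^{(e)}=\{g\in\mathrm{Aut}(X):\ \text{for every edge }\eta\ \text{there is } g'\in PGL_2(F)\text{ with } g|_{B(\eta,e)}=g'|_{B(\eta,e)}\}$. An end is an equivalence class of infinite paths $(y_i)_{i\in\mathbb{N}}$ (distinct vertices, consecutive ones adjacent), two paths being equivalent if they agree after a shift of index from some point on; automorphisms act on ends. *)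

theory Defs
  imports Main
begin

text \<open>A valuation v on the field 'a; only its values on nonzero elements matter.
  vge v x k means "x = 0 or v x >= k", i.e. x lies in the ideal pi^k o.\<close>

definition vge :: "('a::field \<Rightarrow> int) \<Rightarrow> 'a \<Rightarrow> int \<Rightarrow> bool" where
  "vge v x k \<longleftrightarrow> x = 0 \<or> k \<le> v x"

definition val_ring :: "('a::field \<Rightarrow> int) \<Rightarrow> 'a set" where
  "val_ring v = {x. vge v x 0}"

definition nonarch_local_field :: "('a::field \<Rightarrow> int) \<Rightarrow> bool" where
  "nonarch_local_field v \<longleftrightarrow>
     (\<forall>x y. x \<noteq> 0 \<longrightarrow> y \<noteq> 0 \<longrightarrow> v (x * y) = v x + v y)
   \<and> (\<forall>x y. x \<noteq> 0 \<longrightarrow> y \<noteq> 0 \<longrightarrow> x + y \<noteq> 0 \<longrightarrow> min (v x) (v y) \<le> v (x + y))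
   \<and> (\<exists>p. p \<noteq> 0 \<and> v p = 1)
   \<and> (\<exists>R. finite R \<and> R \<subseteq> val_ring v \<and> (\<forall>x\<in>val_ring v. \<exists>r\<in>R. vge v (x - r) 1))
   \<and> (\<forall>s :: nat \<Rightarrow> 'a. (\<forall>k::int. \<exists>N. \<forall>m\<ge>N. \<forall>n\<ge>N. vge v (s m - s n) k)
         \<longrightarrow> (\<exists>l. \<forall>k::int. \<exists>N. \<forall>n\<ge>N. vge v (s n - l) k))"

definition smul2 :: "'a::field \<Rightarrow> 'a \<times> 'a \<Rightarrow> 'a \<times> 'a" where
  "smul2 c u = (c * fst u, c * snd u)"

definition is_lattice :: "('a::field \<Rightarrow> int) \<Rightarrow> ('a \<times> 'a) set \<Rightarrow> bool" where
  "is_lattice v L \<longleftrightarrow> (\<exists>u w. fst u * snd w - snd u * fst w \<noteq> 0 \<and>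
      L = {(a * fst u + b * fst w, a * snd u + b * snd w) | a b. a \<in> val_ring v \<and> b \<in> val_ring v})"

definition hclass :: "('a::field \<times> 'a) set \<Rightarrow> ('a \<times> 'a) set set" where
  "hclass L = {smul2 c ` L | c. c \<noteq> 0}"

definition tree_V :: "('a::field \<Rightarrow> int) \<Rightarrow> ('a \<times> 'a) set set set" where
  "tree_V v = {hclass L | L. is_lattice v L}"

definition tree_adj :: "('a::field \<Rightarrow> int) \<Rightarrow> ('a \<times> 'a) set set \<Rightarrow> ('a \<times> 'a) set set \<Rightarrow> bool" where
  "tree_adj v x y \<longleftrightarrow> x \<in> tree_V v \<and> y \<in> tree_V v \<and>
     (\<exists>p L L'. p \<noteq> 0 \<and> v p = 1 \<and> L \<in> x \<and> L' \<in> y \<and> smul2 p ` L \<subset> L' \<and> L' \<subset> L)"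

definition tree_d :: "('a::field \<Rightarrow> int) \<Rightarrow> ('a \<times> 'a) set set \<Rightarrow> ('a \<times> 'a) set set \<Rightarrow> nat" where
  "tree_d v x y = (LEAST n. (x, y) \<in> {(a, b). tree_adj v a b} ^^ n)"

definition tree_Aut :: "('a::field \<Rightarrow> int) \<Rightarrow> (('a \<times> 'a) set set \<Rightarrow> ('a \<times> 'a) set set) set" where
  "tree_Aut v = {g. bij_betw g (tree_V v) (tree_V v) \<and>
      (\<forall>x\<in>tree_V v. \<forall>y\<in>tree_V v. tree_d v (g x) (g y) = tree_d v x y)}"

text \<open>A matrix (a,b,c,d) stands for [[a,b],[c,d]], acting on column vectors.\<close>
definition mat_act :: "'a::field \<times> 'a \<times> 'a \<times> 'a \<Rightarrow> 'a \<times> 'a \<Rightarrow> 'a \<times> 'a" where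
  "mat_act M u = (case M of (a, b, c, d) \<Rightarrow> (a * fst u + b * snd u, c * fst u + d * snd u))"

definition mat_det :: "'a::field \<times> 'a \<times> 'a \<times> 'a \<Rightarrow> 'a" where
  "mat_det M = (case M of (a, b, c, d) \<Rightarrow> a * d - b * c)"

definition vert_act :: "'a::field \<times> 'a \<times> 'a \<times> 'a \<Rightarrow> ('a \<times> 'a) set set \<Rightarrow> ('a \<times> 'a) set set" where
  "vert_act M x = (\<lambda>L. mat_act M ` L) ` x"

definition PGL2_tree :: "((('a::field \<times> 'a) set set) \<Rightarrow> ('a \<times> 'a) set set) set" where
  "PGL2_tree = {vert_act M | M. mat_det M \<noteq> 0}"

definition Ghat :: "('a::field \<Rightarrow> int) \<Rightarrow> nat \<Rightarrow> (('a \<times> 'a) set set \<Rightarrow> ('a \<times> 'a) set set) set" where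
  "Ghat v e = {g \<in> tree_Aut v. \<forall>x1 x2. tree_adj v x1 x2 \<longrightarrow>
      (\<exists>g'\<in>PGL2_tree. \<forall>y\<in>tree_V v.
          min (tree_d v y x1) (tree_d v y x2) \<le> e \<longrightarrow> g y = g' y)}"

definition tree_ray :: "('a::field \<Rightarrow> int) \<Rightarrow> (nat \<Rightarrow> ('a \<times> 'a) set set) \<Rightarrow> bool" where
  "tree_ray v y \<longleftrightarrow> (\<forall>n. y n \<in> tree_V v) \<and> inj y \<and> (\<forall>n. tree_adj v (y n) (y (Suc n)))"

definition same_end :: "(nat \<Rightarrow> 'b) \<Rightarrow> (nat \<Rightarrow> 'b) \<Rightarrow> bool" where
  "same_end y z \<longleftrightarrow> (\<exists>i j. \<forall>n. y (i + n) = z (j + n))"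

end

theory Submission
  imports Defs
begin


locale nalf = fixes v :: "'a::field \<Rightarrow> int" assumes nalf: "nonarch_local_field v"
begin

lemma vmult: "x \<noteq> 0 \<Longrightarrow> y \<noteq> 0 \<Longrightarrow> v (x * y) = v x + v y"
  using nalf unfolding nonarch_local_field_def by blast

lemma vultra: "x \<noteq> 0 \<Longrightarrow> y \<noteq> 0 \<Longrightarrow> x + y \<noteq> 0 \<Longrightarrow> min (v x) (v y) \<le> v (x + y)"
  using nalf unfolding nonarch_local_field_def by blast

lemma unif_ex: "\<exists>p. p \<noteq> 0 \<and> v p = 1"
  using nalf unfolding nonarch_local_field_def by blast

lemma complete: fixes s :: "nat \<Rightarrow> 'a" shows "(\<forall>k::int. \<exists>N. \<forall>m\<ge>N. \<forall>n\<ge>N. vge v (s m - s n) k)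
         \<Longrightarrow> (\<exists>l. \<forall>k::int. \<exists>N. \<forall>n\<ge>N. vge v (s n - l) k)"
proof -
  assume h: "(\<forall>k::int. \<exists>N. \<forall>m\<ge>N. \<forall>n\<ge>N. vge v (s m - s n) k)"
  have "\<forall>s :: nat \<Rightarrow> 'a. (\<forall>k::int. \<exists>N. \<forall>m\<ge>N. \<forall>n\<ge>N. vge v (s m - s n) k)
         \<longrightarrow> (\<exists>l. \<forall>k::int. \<exists>N. \<forall>n\<ge>N. vge v (s n - l) k)"
    using nalf unfolding nonarch_local_field_def by (elim conjE)
  then show ?thesis using h by blast
qed

lemma v1: "v 1 = 0"
  using vmult[of 1 1] by simp

lemma vinv: "x \<noteq> 0 \<Longrightarrow> v (inverse x) = - v x"
  using vmult[of x "inverse x"] v1 by simp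

lemma vm1: "v (-1) = 0"
  using vmult[of "-1" "-1"] v1 by simp

lemma vneg: "v (- x) = v x"
proof (cases "x = 0")
  case True then show ?thesis by simp
next
  case False
  have "- x = (-1) * x" by simp
  then show ?thesis using vmult[of "-1" x] vm1 False by simp
qed

lemma vdiv: "x \<noteq> 0 \<Longrightarrow> y \<noteq> 0 \<Longrightarrow> v (x / y) = v x - v y"
  using vmult[of x "inverse y"] vinv[of y] by (simp add: divide_inverse)

lemma vge_add: "vge v x k \<Longrightarrow> vge v y k \<Longrightarrow> vge v (x + y) k"
proof -
  assume a: "vge v x k" "vge v y k"
  show ?thesis
  proof (cases "x = 0 \<or> y = 0 \<or> x + y = 0")
    case True then show ?thesis using a unfolding vge_def by auto
  next
    case False then show ?thesis using a vultra[of x y] unfolding vge_def by (auto simp: min_def split: if_splits)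
  qed
qed

lemma vge_neg: "vge v (- x) k = vge v x k"
  unfolding vge_def by (simp add: vneg)

lemma vge_diff: "vge v x k \<Longrightarrow> vge v y k \<Longrightarrow> vge v (x - y) k"
  using vge_add[of x k "-y"] vge_neg[of y] by simp

lemma vge_mult: "vge v x k \<Longrightarrow> vge v y m \<Longrightarrow> vge v (x * y) (k + m)"
  unfolding vge_def using vmult[of x y] by (cases "y = 0"; cases "x = 0") auto

lemma vge_mono: "vge v x k \<Longrightarrow> m \<le> k \<Longrightarrow> vge v x m"
  unfolding vge_def by auto

lemma vge0[simp]: "vge v 0 k" unfolding vge_def by simp

abbreviation Ov where "Ov \<equiv> val_ring v"

lemma O_iff: "x \<in> Ov \<longleftrightarrow> vge v x 0" unfolding val_ring_def by simp

lemma O0[simp]: "0 \<in> Ov" and O1[simp]: "1 \<in> Ov"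
  unfolding val_ring_def vge_def by (auto simp: v1)

lemma O_add[intro]: "x \<in> Ov \<Longrightarrow> y \<in> Ov \<Longrightarrow> x + y \<in> Ov"
  using vge_add unfolding O_iff by blast
lemma O_diff[intro]: "x \<in> Ov \<Longrightarrow> y \<in> Ov \<Longrightarrow> x - y \<in> Ov"
  using vge_diff unfolding O_iff by blast
lemma O_neg[intro]: "x \<in> Ov \<Longrightarrow> - x \<in> Ov"
  using vge_neg unfolding O_iff by blast
lemma O_mult[intro]: "x \<in> Ov \<Longrightarrow> y \<in> Ov \<Longrightarrow> x * y \<in> Ov"
  using vge_mult[of x 0 y 0] unfolding O_iff by simp

definition unit :: "'a \<Rightarrow> bool" where "unit x \<longleftrightarrow> x \<noteq> 0 \<and> v x = 0"

lemma unit_O: "unit x \<Longrightarrow> x \<in> Ov" unfolding unit_def O_iff vge_def by simp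
lemma unit_inv: "unit x \<Longrightarrow> inverse x \<in> Ov" unfolding unit_def O_iff vge_def by (simp add: vinv)
lemma unit_inv_unit: "unit x \<Longrightarrow> unit (inverse x)" unfolding unit_def by (simp add: vinv)
lemma unit_mult: "unit x \<Longrightarrow> unit y \<Longrightarrow> unit (x * y)" unfolding unit_def by (simp add: vmult)
lemma unit_div_O: "unit u \<Longrightarrow> x \<in> Ov \<Longrightarrow> x / u \<in> Ov"
  using unit_inv by (simp add: divide_inverse O_mult)
lemma O_cases: "x \<in> Ov \<Longrightarrow> unit x \<or> vge v x 1"
  unfolding O_iff vge_def unit_def by auto

end


definition lin :: "'a::field \<Rightarrow> 'a \<times> 'a \<Rightarrow> 'a \<Rightarrow> 'a \<times> 'a \<Rightarrow> 'a \<times> 'a" where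
  "lin c a d b = (c * fst a + d * fst b, c * snd a + d * snd b)"

definition det2 :: "'a::field \<times> 'a \<Rightarrow> 'a \<times> 'a \<Rightarrow> 'a" where
  "det2 a b = fst a * snd b - snd a * fst b"

lemma lin_lin: "lin x (lin al a be b) y (lin ga a de b) = lin (x*al + y*ga) a (x*be + y*de) b"
  by (simp add: lin_def algebra_simps)

lemma det2_lin: "det2 (lin al a be b) (lin ga a de b) = (al*de - be*ga) * det2 a b"
  by (simp add: lin_def det2_def algebra_simps)

lemma smul2_lin: "smul2 c (lin x a y b) = lin x (smul2 c a) y (smul2 c b)"
  by (simp add: lin_def smul2_def algebra_simps)

lemma lin_10[simp]: "lin 1 a 0 b = a" and lin_01[simp]: "lin 0 a 1 b = b"
  by (simp_all add: lin_def)

context nalf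
begin

definition lat :: "'a \<times> 'a \<Rightarrow> 'a \<times> 'a \<Rightarrow> ('a \<times> 'a) set" where
  "lat a b = {lin al a be b | al be. al \<in> Ov \<and> be \<in> Ov}"

lemma is_lattice_iff: "is_lattice v L \<longleftrightarrow> (\<exists>u w. det2 u w \<noteq> 0 \<and> L = lat u w)"
  unfolding is_lattice_def lat_def lin_def det2_def by simp

lemma lat_mem: "x \<in> lat a b \<longleftrightarrow> (\<exists>al be. al \<in> Ov \<and> be \<in> Ov \<and> x = lin al a be b)"
  unfolding lat_def by blast

lemma lat_memI: "al \<in> Ov \<Longrightarrow> be \<in> Ov \<Longrightarrow> lin al a be b \<in> lat a b"
  unfolding lat_def by blast

lemma lat_a: "a \<in> lat a b" using lat_memI[of 1 0 a b] by simp
lemma lat_b: "b \<in> lat a b" using lat_memI[of 0 1 a b] by simp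

lemma lat_closed: "x \<in> lat a b \<Longrightarrow> y \<in> lat a b \<Longrightarrow> xi \<in> Ov \<Longrightarrow> eta \<in> Ov \<Longrightarrow> lin xi x eta y \<in> lat a b"
  unfolding lat_mem using lin_lin by (metis O_add O_mult)

lemma lat_sub: "A \<in> lat a b \<Longrightarrow> B \<in> lat a b \<Longrightarrow> lat A B \<subseteq> lat a b"
proof
  fix x assume A: "A \<in> lat a b" and B: "B \<in> lat a b" and "x \<in> lat A B"
  then obtain al be where "al \<in> Ov" "be \<in> Ov" "x = lin al A be B" unfolding lat_mem by blast
  then show "x \<in> lat a b" using lat_closed[OF A B] by blast
qed

lemma lat_eqI: "A \<in> lat a b \<Longrightarrow> B \<in> lat a b \<Longrightarrow> a \<in> lat A B \<Longrightarrow> b \<in> lat A B \<Longrightarrow> lat A B = lat a b"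
  using lat_sub by blast

lemma lat_swap: "lat a b = lat b a"
  by (rule lat_eqI) (simp_all add: lat_a lat_b)

lemma lat_shear: assumes "t \<in> Ov" shows "lat (lin 1 a t b) b = lat a b"
proof (rule lat_eqI)
  show "lin 1 a t b \<in> lat a b" using assms by (intro lat_memI) auto
  show "b \<in> lat a b" by (rule lat_b)
  have "a = lin 1 (lin 1 a t b) (-t) b" by (simp add: lin_def)
  then show "a \<in> lat (lin 1 a t b) b" using assms by (metis O1 O_neg lat_memI)
  show "b \<in> lat (lin 1 a t b) b" by (rule lat_b)
qed

lemma lat_unit2: assumes "unit u" shows "lat a (smul2 u b) = lat a b"
proof (rule lat_eqI)
  show "a \<in> lat a b" by (rule lat_a)
  have "smul2 u b = lin 0 a u b" by (simp add: lin_def smul2_def)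
  then show "smul2 u b \<in> lat a b" using assms unit_O by (metis O0 lat_memI)
  show "a \<in> lat a (smul2 u b)" by (rule lat_a)
  have "b = lin 0 a (inverse u) (smul2 u b)" using assms unfolding unit_def
    by (simp add: lin_def smul2_def mult.assoc[symmetric])
  then show "b \<in> lat a (smul2 u b)" using assms unit_inv by (metis O0 lat_memI)
qed

lemma lat_unit1: "unit u \<Longrightarrow> lat (smul2 u a) b = lat a b"
  using lat_unit2 lat_swap by metis

lemma smul_lat: "smul2 c ` lat a b = lat (smul2 c a) (smul2 c b)"
proof
  show "smul2 c ` lat a b \<subseteq> lat (smul2 c a) (smul2 c b)"
  proof
    fix x assume "x \<in> smul2 c ` lat a b"
    then obtain y where "y \<in> lat a b" "x = smul2 c y" by blast
    then obtain al be where "al \<in> Ov" "be \<in> Ov" "x = smul2 c (lin al a be b)" unfolding lat_mem by blast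
    then show "x \<in> lat (smul2 c a) (smul2 c b)" using lat_memI smul2_lin by metis
  qed
  show "lat (smul2 c a) (smul2 c b) \<subseteq> smul2 c ` lat a b"
  proof
    fix x assume "x \<in> lat (smul2 c a) (smul2 c b)"
    then obtain al be where "al \<in> Ov" "be \<in> Ov" "x = lin al (smul2 c a) be (smul2 c b)" unfolding lat_mem by blast
    then show "x \<in> smul2 c ` lat a b" using lat_memI smul2_lin by (metis image_eqI)
  qed
qed

end


lemma smul2_smul2: "smul2 c (smul2 d x) = smul2 (c*d) x"
  by (simp add: smul2_def algebra_simps)
lemma smul2_1[simp]: "smul2 1 x = x" by (simp add: smul2_def)
lemma smul2_image_comp: "smul2 c ` (smul2 d ` K) = smul2 (c*d) ` K"
  by (auto simp: image_image smul2_smul2)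

lemma hclass_mem: "L \<in> hclass K \<longleftrightarrow> (\<exists>c. c \<noteq> 0 \<and> L = smul2 c ` K)"
  unfolding hclass_def by blast

lemma hclass_eq: assumes "L \<in> hclass K" shows "hclass L = hclass K"
proof -
  obtain c where c: "c \<noteq> 0" "L = smul2 c ` K" using assms hclass_mem by blast
  show ?thesis
  proof
    show "hclass L \<subseteq> hclass K" unfolding hclass_def using c by (auto simp: smul2_image_comp)
    show "hclass K \<subseteq> hclass L"
    proof
      fix M assume "M \<in> hclass K"
      then obtain d where d: "d \<noteq> 0" "M = smul2 d ` K" using hclass_mem by blast
      have "M = smul2 (d / c) ` L" using c d by (simp add: smul2_image_comp)
      moreover have "d / c \<noteq> 0" using c d by simp
      ultimately show "M \<in> hclass L" unfolding hclass_mem by blast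
    qed
  qed
qed

lemma hclass_smul: "c \<noteq> 0 \<Longrightarrow> hclass (smul2 c ` K) = hclass K"
  using hclass_eq hclass_mem by blast

context nalf
begin

definition pi0 where "pi0 = (SOME p. p \<noteq> 0 \<and> v p = 1)"

lemma pi0: "pi0 \<noteq> 0" "v pi0 = 1"
  using someI_ex[OF unif_ex] unfolding pi0_def by auto

lemma vpow: "pi0 ^ k \<noteq> 0 \<and> v (pi0 ^ k) = int k"
  by (induction k) (auto simp: v1 vmult pi0)

lemma vge_div_pow: "vge v x (int k) \<Longrightarrow> x / pi0 ^ k \<in> Ov"
  unfolding O_iff vge_def using vpow[of k] by (auto simp: vdiv)

lemma O_pow: "t \<in> Ov \<Longrightarrow> vge v (t * pi0 ^ k) (int k)"
  unfolding O_iff vge_def using vpow[of k] by (auto simp: vmult)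

lemma unit_ratio: "x \<noteq> 0 \<Longrightarrow> y \<noteq> 0 \<Longrightarrow> v x = v y \<Longrightarrow> unit (x / y)"
  unfolding unit_def by (simp add: vdiv)

lemma div_q_O: "q \<noteq> 0 \<Longrightarrow> v q = 1 \<Longrightarrow> vge v x 1 \<Longrightarrow> x / q \<in> Ov"
  unfolding O_iff vge_def by (cases "x = 0") (auto simp: vdiv)

lemma hclass_lat_smul: "c \<noteq> 0 \<Longrightarrow> hclass (lat (smul2 c a) (smul2 c b)) = hclass (lat a b)"
  using hclass_smul smul_lat by metis

lemma lat_closed': "L = lat u w \<Longrightarrow> x \<in> L \<Longrightarrow> y \<in> L \<Longrightarrow> xi \<in> Ov \<Longrightarrow> eta \<in> Ov \<Longrightarrow> lin xi x eta y \<in> L"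
  using lat_closed by blast

lemma lemmaU:
  assumes q: "q \<noteq> 0" "v q = 1"
    and L': "L' = lat u w"
    and s1: "smul2 q ` lat a b \<subset> L'" and s2: "L' \<subset> lat a b"
    and z: "z \<in> L'" "z = lin al a be b" "al \<in> Ov" "be \<in> Ov" "unit al"
  shows "L' = lat z (smul2 q b)"
proof
  have qb: "smul2 q b \<in> L'" using s1 lat_b by blast
  show "lat z (smul2 q b) \<subseteq> L'"
    using L' lat_sub qb z(1) by blast
  show "L' \<subseteq> lat z (smul2 q b)"
  proof
    fix x assume x: "x \<in> L'"
    then have "x \<in> lat a b" using s2 by blast
    then obtain ga de where gd: "ga \<in> Ov" "de \<in> Ov" "x = lin ga a de b" unfolding lat_mem by blast
    define eps where "eps = de - ga * be / al"
    have alnz: "al \<noteq> 0" using z(5) unit_def by blast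
    have epsO: "eps \<in> Ov" unfolding eps_def using gd z unit_div_O by (auto intro!: O_diff O_mult)
    show "x \<in> lat z (smul2 q b)"
    proof (cases "vge v eps 1")
      case True
      have "x = lin (ga / al) z (eps / q) (smul2 q b)"
        using alnz q gd z unfolding eps_def by (simp add: lin_def smul2_def prod_eq_iff field_simps)
      moreover have "ga / al \<in> Ov" using unit_div_O gd z by blast
      moreover have "eps / q \<in> Ov" using div_q_O[OF q True] .
      ultimately show ?thesis using lat_memI by metis
    next
      case False
      then have ue: "unit eps" using O_cases epsO by blast
      then have enz: "eps \<noteq> 0" unfolding unit_def by blast
      have e1: "fst x - ga / al * fst z = eps * fst b" "snd x - ga / al * snd z = eps * snd b"
        using alnz gd z unfolding eps_def by (simp_all add: lin_def field_simps)
      have "b = lin (inverse eps) x (- (ga / al) / eps) z"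
      proof -
        have "fst b = inverse eps * (fst x - ga / al * fst z)" "snd b = inverse eps * (snd x - ga / al * snd z)"
          using e1 enz by simp_all
        then show ?thesis using enz alnz by (simp add: lin_def prod_eq_iff field_simps)
      qed
      moreover have "inverse eps \<in> Ov" using unit_inv ue by blast
      moreover have "- (ga / al) / eps \<in> Ov" using unit_div_O ue gd z by blast
      ultimately have bL: "b \<in> L'" using lat_closed'[OF L' x z(1)] by metis
      have "a = lin (inverse al) z (- be / al) b"
        using alnz z by (simp add: lin_def prod_eq_iff field_simps)
      moreover have "inverse al \<in> Ov" using unit_inv z by blast
      moreover have "- be / al \<in> Ov" using unit_div_O z by blast
      ultimately have aL: "a \<in> L'" using lat_closed'[OF L' z(1) bL] by metis
      have "lat a b \<subseteq> L'" using lat_sub aL bL L' by blast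
      then show ?thesis using s2 by blast
    qed
  qed
qed

end


context nalf
begin

lemma tree_V_lat: "det2 a b \<noteq> 0 \<Longrightarrow> hclass (lat a b) \<in> tree_V v"
  unfolding tree_V_def is_lattice_iff by blast

lemma tree_V_elim: "x \<in> tree_V v \<Longrightarrow> \<exists>a b. det2 a b \<noteq> 0 \<and> x = hclass (lat a b)"
  unfolding tree_V_def is_lattice_iff by blast

lemma smul_det: "det2 (smul2 c a) (smul2 c b) = c * c * det2 a b"
  by (simp add: det2_def smul2_def algebra_simps)

lemma tree_V_mem: assumes "x \<in> tree_V v" "L \<in> x"
  shows "x = hclass L \<and> (\<exists>u w. det2 u w \<noteq> 0 \<and> L = lat u w)"
proof -
  obtain a b where ab: "det2 a b \<noteq> 0" "x = hclass (lat a b)" using tree_V_elim assms by blast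
  then obtain c where c: "c \<noteq> 0" "L = smul2 c ` lat a b" using assms hclass_mem by blast
  have "x = hclass L" using ab assms hclass_eq by auto
  moreover have "L = lat (smul2 c a) (smul2 c b)" using c smul_lat by simp
  moreover have "det2 (smul2 c a) (smul2 c b) \<noteq> 0" using c ab by (simp add: smul_det)
  ultimately show ?thesis by blast
qed

lemma neighbor:
  assumes cd: "det2 c d \<noteq> 0" and adj: "tree_adj v (hclass (lat c d)) x"
  shows "(\<exists>r\<in>Ov. x = hclass (lat (lin 1 c r d) (smul2 pi0 d))) \<or> x = hclass (lat d (smul2 pi0 c))"
proof -
  obtain q L L' where q: "q \<noteq> 0" "v q = 1" and L: "L \<in> hclass (lat c d)" and L': "L' \<in> x"
    and s1: "smul2 q ` L \<subset> L'" and s2: "L' \<subset> L" and xV: "x \<in> tree_V v"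
    using adj unfolding tree_adj_def by blast
  obtain t where t: "t \<noteq> 0" "L = smul2 t ` lat c d" using L hclass_mem by blast
  define a where "a = smul2 t c"
  define b where "b = smul2 t d"
  have Lab: "L = lat a b" using t smul_lat a_def b_def by simp
  obtain u w where uw: "L' = lat u w" and xL': "x = hclass L'" using tree_V_mem[OF xV L'] by blast
  obtain z where z: "z \<in> L'" "z \<notin> smul2 q ` L" using s1 by blast
  then have "z \<in> L" using s2 by blast
  then obtain al be where ab: "al \<in> Ov" "be \<in> Ov" "z = lin al a be b" using Lab lat_mem by blast
  have notboth: "\<not> (vge v al 1 \<and> vge v be 1)"
  proof
    assume h: "vge v al 1 \<and> vge v be 1"
    have "z = smul2 q (lin (al/q) a (be/q) b)" using ab q by (simp add: lin_def smul2_def prod_eq_iff field_simps)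
    moreover have "lin (al/q) a (be/q) b \<in> L" using Lab lat_memI div_q_O[OF q] h by blast
    ultimately show False using z by blast
  qed
  have uq: "unit (q / pi0)" using unit_ratio q pi0 by simp
  have pq: "smul2 q y = smul2 (q/pi0) (smul2 pi0 y)" for y using pi0 by (simp add: smul2_smul2)
  show ?thesis
  proof (cases "unit al")
    case True
    have "L' = lat z (smul2 q b)" using lemmaU[OF q uw _ _ z(1) ab(3) ab(1) ab(2) True] s1 s2 Lab by blast
    also have "\<dots> = lat z (smul2 pi0 b)" using pq lat_unit2 uq by simp
    also have "z = smul2 al (lin 1 a (be/al) b)" using ab True unfolding unit_def
      by (simp add: lin_def smul2_def prod_eq_iff field_simps)
    also have "lat (smul2 al (lin 1 a (be/al) b)) (smul2 pi0 b) = lat (lin 1 a (be/al) b) (smul2 pi0 b)"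
      using lat_unit1 True by simp
    also have "lin 1 a (be/al) b = smul2 t (lin 1 c (be/al) d)" unfolding a_def b_def
      by (simp add: lin_def smul2_def algebra_simps)
    also have "smul2 pi0 b = smul2 t (smul2 pi0 d)" unfolding b_def by (simp add: smul2_smul2 mult.commute)
    finally have "x = hclass (lat (smul2 t (lin 1 c (be/al) d)) (smul2 t (smul2 pi0 d)))" using xL' by simp
    then have "x = hclass (lat (lin 1 c (be/al) d) (smul2 pi0 d))" using hclass_lat_smul t by simp
    moreover have "be / al \<in> Ov" using unit_div_O True ab by blast
    ultimately show ?thesis by blast
  next
    case False
    then have al1: "vge v al 1" using O_cases ab by blast
    then have ube: "unit be" using notboth O_cases ab by blast
    have Lba: "L = lat b a" using Lab lat_swap by simp
    have zba: "z = lin be b al a" using ab by (simp add: lin_def algebra_simps)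
    have "L' = lat z (smul2 q a)" using lemmaU[OF q uw _ _ z(1) zba ab(2) ab(1) ube] s1 s2 Lba by blast
    also have "z = smul2 be (lin 1 b (al/be) a)" using ab ube unfolding unit_def
      by (simp add: lin_def smul2_def prod_eq_iff field_simps)
    also have "lat (smul2 be (lin 1 b (al/be) a)) (smul2 q a) = lat (lin 1 b (al/be) a) (smul2 q a)"
      using lat_unit1 ube by simp
    also have "lin 1 b (al/be) a = lin 1 b (al/be/q) (smul2 q a)" using q
      by (simp add: lin_def smul2_def)
    also have "lat (lin 1 b (al/be/q) (smul2 q a)) (smul2 q a) = lat b (smul2 q a)"
    proof (rule lat_shear)
      have "vge v (al / be) 1"
      proof -
        have "al / be = al * inverse be" by (simp add: divide_inverse)
        moreover have "vge v (inverse be) 0" using unit_inv ube O_iff by blast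
        ultimately show ?thesis using vge_mult[OF al1] by fastforce
      qed
      then show "al / be / q \<in> Ov" using div_q_O[OF q] by blast
    qed
    also have "\<dots> = lat b (smul2 pi0 a)" using pq lat_unit2 uq by simp
    also have "\<dots> = lat (smul2 t d) (smul2 t (smul2 pi0 c))" unfolding a_def b_def by (simp add: smul2_smul2 mult.commute)
    finally have "x = hclass (lat (smul2 t d) (smul2 t (smul2 pi0 c)))" using xL' by simp
    then show ?thesis using hclass_lat_smul t by simp
  qed
qed

end


context nalf
begin

lemma det2_shear: "det2 (lin 1 a t b) b = det2 a b"
  by (simp add: det2_def lin_def algebra_simps)

lemma det2_swap: "det2 b a = - det2 a b"
  by (simp add: det2_def algebra_simps)

lemma det2_smul2: "det2 a (smul2 c b) = c * det2 a b"
  by (simp add: det2_def smul2_def algebra_simps)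

lemma lat_shift: assumes "vge v u (int k)"
  shows "lat (lin 1 a (s + u) b) (smul2 (pi0 ^ k) b) = lat (lin 1 a s b) (smul2 (pi0 ^ k) b)"
proof -
  have "lin 1 a (s + u) b = lin 1 (lin 1 a s b) (u / pi0 ^ k) (smul2 (pi0 ^ k) b)"
    using vpow[of k] by (simp add: lin_def smul2_def algebra_simps)
  then show ?thesis using lat_shear vge_div_pow[OF assms] by simp
qed

lemma ray_base: assumes "tree_ray v y"
  shows "\<exists>a b. det2 a b \<noteq> 0 \<and> y 0 = hclass (lat a b) \<and> y 1 = hclass (lat a (smul2 pi0 b))"
proof -
  have y0: "y 0 \<in> tree_V v" and adj: "tree_adj v (y 0) (y 1)" using assms unfolding tree_ray_def by auto
  obtain a0 b0 where ab0: "det2 a0 b0 \<noteq> 0" "y 0 = hclass (lat a0 b0)" using tree_V_elim[OF y0] by blast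
  from neighbor[OF ab0(1)] adj ab0(2)
  have "(\<exists>r\<in>Ov. y 1 = hclass (lat (lin 1 a0 r b0) (smul2 pi0 b0))) \<or> y 1 = hclass (lat b0 (smul2 pi0 a0))"
    by simp
  then show ?thesis
  proof
    assume "\<exists>r\<in>Ov. y 1 = hclass (lat (lin 1 a0 r b0) (smul2 pi0 b0))"
    then obtain r where r: "r \<in> Ov" "y 1 = hclass (lat (lin 1 a0 r b0) (smul2 pi0 b0))" by blast
    have "det2 (lin 1 a0 r b0) b0 \<noteq> 0" using ab0(1) by (simp only: det2_shear) simp
    moreover have "y 0 = hclass (lat (lin 1 a0 r b0) b0)" using ab0 lat_shear r by simp
    ultimately show ?thesis using r by blast
  next
    assume "y 1 = hclass (lat b0 (smul2 pi0 a0))"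
    moreover have "det2 b0 a0 \<noteq> 0" using ab0(1) det2_swap[of a0 b0] by simp
    moreover have "y 0 = hclass (lat b0 a0)" using ab0 lat_swap by simp
    ultimately show ?thesis by blast
  qed
qed

lemma ray_step:
  assumes ray: "tree_ray v y" and n: "1 \<le> n" and ab: "det2 a b \<noteq> 0"
    and yn: "y n = hclass (lat (lin 1 a s b) (smul2 (pi0 ^ n) b))"
    and yn1: "y (n - 1) = hclass (lat (lin 1 a s b) (smul2 (pi0 ^ (n - 1)) b))"
  shows "\<exists>r\<in>Ov. y (Suc n) = hclass (lat (lin 1 a (s + r * pi0 ^ n) b) (smul2 (pi0 ^ Suc n) b))"
proof -
  define c where "c = lin 1 a s b"
  define d where "d = smul2 (pi0 ^ n) b"
  have cd: "det2 c d \<noteq> 0" unfolding c_def d_def using ab vpow[of n] by (simp add: det2_smul2 det2_shear)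
  have adj: "tree_adj v (y n) (y (Suc n))" using ray unfolding tree_ray_def by auto
  from neighbor[OF cd] adj yn
  have "(\<exists>r\<in>Ov. y (Suc n) = hclass (lat (lin 1 c r d) (smul2 pi0 d))) \<or> y (Suc n) = hclass (lat d (smul2 pi0 c))"
    unfolding c_def d_def by simp
  then show ?thesis
  proof
    assume "\<exists>r\<in>Ov. y (Suc n) = hclass (lat (lin 1 c r d) (smul2 pi0 d))"
    then obtain r where r: "r \<in> Ov" "y (Suc n) = hclass (lat (lin 1 c r d) (smul2 pi0 d))" by blast
    have "lin 1 c r d = lin 1 a (s + r * pi0 ^ n) b" unfolding c_def d_def
      by (simp add: lin_def smul2_def algebra_simps)
    moreover have "smul2 pi0 d = smul2 (pi0 ^ Suc n) b" unfolding d_def by (simp add: smul2_smul2)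
    ultimately show ?thesis using r by auto
  next
    assume h: "y (Suc n) = hclass (lat d (smul2 pi0 c))"
    have "d = smul2 pi0 (smul2 (pi0 ^ (n - 1)) b)" unfolding d_def using n
      by (simp add: smul2_smul2 power_Suc[symmetric])
    then have "lat d (smul2 pi0 c) = lat (smul2 pi0 (smul2 (pi0 ^ (n - 1)) b)) (smul2 pi0 c)" by simp
    then have "hclass (lat d (smul2 pi0 c)) = hclass (lat (smul2 (pi0 ^ (n - 1)) b) c)"
      using hclass_lat_smul pi0 by simp
    then have "y (Suc n) = y (n - 1)" using h yn1 lat_swap unfolding c_def by simp
    moreover have "inj y" using ray unfolding tree_ray_def by auto
    ultimately show ?thesis using n by (metis Suc_n_not_le_n diff_le_self injD)
  qed
qed

end


context nalf
begin

lemma ray_normal: assumes ray: "tree_ray v y"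
  shows "\<exists>w b. det2 w b \<noteq> 0 \<and> (\<forall>k. y k = hclass (lat w (smul2 (pi0 ^ k) b)))"
proof -
  obtain a b where ab: "det2 a b \<noteq> 0" "y 0 = hclass (lat a b)" "y 1 = hclass (lat a (smul2 pi0 b))"
    using ray_base[OF ray] by blast
  define P where "P n sn r \<longleftrightarrow> r \<in> Ov \<and>
      y (Suc n) = hclass (lat (lin 1 a (sn + r * pi0 ^ n) b) (smul2 (pi0 ^ Suc n) b))" for n sn r
  define s where "s = rec_nat 0 (\<lambda>n sn. sn + (SOME r. P n sn r) * pi0 ^ n)"
  have s0: "s 0 = 0" unfolding s_def by simp
  have sS: "s (Suc n) = s n + (SOME r. P n (s n) r) * pi0 ^ n" for n unfolding s_def by simp
  have main: "s n \<in> Ov \<and> (\<forall>k\<le>n. y k = hclass (lat (lin 1 a (s n) b) (smul2 (pi0 ^ k) b)))" for n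
  proof (induction n)
    case 0
    then show ?case using s0 ab by (simp add: lin_def)
  next
    case (Suc n)
    have ex: "\<exists>r. P n (s n) r"
    proof (cases "n = 0")
      case True
      then show ?thesis unfolding P_def using s0 ab by (intro exI[of _ 0]) (simp add: lin_def)
    next
      case False
      then have "\<exists>r\<in>Ov. y (Suc n) = hclass (lat (lin 1 a (s n + r * pi0 ^ n) b) (smul2 (pi0 ^ Suc n) b))"
        using ray_step[OF ray _ ab(1)] Suc.IH by simp
      then show ?thesis unfolding P_def by blast
    qed
    define r where "r = (SOME r. P n (s n) r)"
    have Pr: "P n (s n) r" unfolding r_def using someI_ex[OF ex] .
    have sSn: "s (Suc n) = s n + r * pi0 ^ n" using sS r_def by simp
    have rO: "r \<in> Ov" using Pr P_def by blast
    have "s (Suc n) \<in> Ov" using sSn rO Suc.IH vpow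
      by (metis O_add O_iff O_pow of_nat_0_le_iff vge_mono)
    moreover have "y k = hclass (lat (lin 1 a (s (Suc n)) b) (smul2 (pi0 ^ k) b))" if k: "k \<le> Suc n" for k
    proof (cases "k = Suc n")
      case True
      then show ?thesis using Pr sSn unfolding P_def by simp
    next
      case False
      then have "k \<le> n" using k by simp
      then have "y k = hclass (lat (lin 1 a (s n) b) (smul2 (pi0 ^ k) b))" using Suc.IH by blast
      moreover have "vge v (r * pi0 ^ n) (int k)" using O_pow[OF rO, of n] vge_mono `k \<le> n` by simp
      ultimately show ?thesis using lat_shift sSn by simp
    qed
    ultimately show ?case by blast
  qed
  have cauchy1: "vge v (s m - s n) (int n)" if "n \<le> m" for m n
    using that
  proof (induction m)
    case 0 then show ?case by simp
  next
    case (Suc m)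
    show ?case
    proof (cases "n = Suc m")
      case True then show ?thesis by simp
    next
      case False
      then have nm: "n \<le> m" using Suc by simp
      define r where "r = (SOME r. P m (s m) r)"
      have "s (Suc m) - s n = (s m - s n) + r * pi0 ^ m" using sS r_def by simp
      moreover have "r \<in> Ov"
      proof -
        have "s (Suc m) \<in> Ov" "s m \<in> Ov" using main by blast+
        have "\<exists>r. P m (s m) r"
        proof (cases "m = 0")
          case True
          then show ?thesis unfolding P_def using s0 ab by (intro exI[of _ 0]) (simp add: lin_def)
        next
          case False
          have "\<exists>r\<in>Ov. y (Suc m) = hclass (lat (lin 1 a (s m + r * pi0 ^ m) b) (smul2 (pi0 ^ Suc m) b))"
            using ray_step[OF ray _ ab(1), of m "s m"] main[of m] False by simp
          then show ?thesis unfolding P_def by blast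
        qed
        then show ?thesis using someI_ex r_def P_def by metis
      qed
      then have "vge v (r * pi0 ^ m) (int n)" using O_pow[of r m] vge_mono nm by simp
      ultimately show ?thesis using vge_add[of "s m - s n" "int n" "r * pi0 ^ m"] Suc.IH nm by (simp add: algebra_simps)
    qed
  qed
  have "\<forall>k::int. \<exists>N. \<forall>m\<ge>N. \<forall>n\<ge>N. vge v (s m - s n) k"
  proof
    fix k :: int
    show "\<exists>N. \<forall>m\<ge>N. \<forall>n\<ge>N. vge v (s m - s n) k"
    proof (intro exI allI impI)
      fix m n assume "nat k \<le> m" "nat k \<le> n"
      show "vge v (s m - s n) k"
      proof (cases "n \<le> m")
        case True
        have "k \<le> int n" using `nat k \<le> n` by linarith
        then show ?thesis using cauchy1[OF True] vge_mono by blast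
      next
        case False
        have "k \<le> int m" using `nat k \<le> m` by linarith
        then have "vge v (s n - s m) k" using cauchy1[of m n] False vge_mono by simp
        then show ?thesis using vge_neg by (metis minus_diff_eq)
      qed
    qed
  qed
  then obtain l where l: "\<forall>k::int. \<exists>N. \<forall>n\<ge>N. vge v (s n - l) k" using complete by blast
  have ln: "vge v (l - s n) (int n)" for n
  proof -
    obtain N where N: "\<forall>m\<ge>N. vge v (s m - l) (int n)" using l by blast
    define m where "m = max N n"
    have "vge v (s m - l) (int n)" using N m_def by simp
    moreover have "vge v (s m - s n) (int n)" using cauchy1 m_def by simp
    ultimately have "vge v ((s m - s n) - (s m - l)) (int n)" using vge_diff by blast
    then show ?thesis by simp
  qed
  define w where "w = lin 1 a l b"
  have "det2 w b \<noteq> 0" unfolding w_def using ab(1) by (simp only: det2_shear) simp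
  moreover have "y k = hclass (lat w (smul2 (pi0 ^ k) b))" for k
  proof -
    have "y k = hclass (lat (lin 1 a (s k) b) (smul2 (pi0 ^ k) b))" using main by blast
    moreover have "lat (lin 1 a (s k + (l - s k)) b) (smul2 (pi0 ^ k) b) = lat (lin 1 a (s k) b) (smul2 (pi0 ^ k) b)"
      using lat_shift ln by blast
    ultimately show ?thesis unfolding w_def by simp
  qed
  ultimately show ?thesis by blast
qed

end


context nalf
begin

lemma change_aux:
  assumes wb: "det2 w b \<noteq> 0" and m1: "m1 = lin al w be b" and m2: "m2 = lin al2 w be2 b"
    and be: "be \<noteq> 0" and be2: "be2 = 0 \<or> v be \<le> v be2" and mm: "det2 m1 m2 \<noteq> 0"
  shows "\<exists>w' b' i j. det2 w' b' \<noteq> 0 \<and> lat w' b' = lat m1 m2 \<and>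
      (\<forall>n. hclass (lat w (smul2 (pi0 ^ (i + n)) b)) = hclass (lat w' (smul2 (pi0 ^ (j + n)) b')))"
proof -
  define t where "t = be2 / be"
  have tO: "t \<in> Ov"
  proof (cases "be2 = 0")
    case True then show ?thesis unfolding t_def by simp
  next
    case False then show ?thesis unfolding t_def O_iff vge_def using be be2 by (simp add: vdiv)
  qed
  define de where "de = al2 - t * al"
  have m2': "lin 1 m2 (-t) m1 = smul2 de w" unfolding m1 m2 de_def t_def using be
    by (simp add: lin_def smul2_def prod_eq_iff field_simps)
  have lat1: "lat m1 m2 = lat (smul2 de w) m1"
    using lat_shear[of "-t" m2 m1] tO lat_swap m2' by (metis O_neg)
  have dm: "det2 m1 (lin 1 m2 (-t) m1) = det2 m1 m2" by (simp add: det2_def lin_def algebra_simps)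
  have denz: "de \<noteq> 0"
  proof
    assume "de = 0"
    then have "det2 m1 (lin 1 m2 (-t) m1) = 0" using m2' by (simp add: det2_def smul2_def)
    then show False using dm mm by simp
  qed
  define w' where "w' = smul2 de w"
  define b' where "b' = m1"
  have wb': "det2 w' b' \<noteq> 0" unfolding w'_def b'_def using dm mm m2' det2_swap[of m1 "smul2 de w"] by (metis minus_zero)
  have latwb: "lat w' b' = lat m1 m2" unfolding w'_def b'_def using lat1 by simp
  define j where "j = nat (v de - v be) + nat (v de - v al)"
  define i where "i = nat (v be + int j - v de)"
  have ij: "int i = v be + int j - v de" unfolding i_def j_def by simp
  have key: "hclass (lat w (smul2 (pi0 ^ (i + n)) b)) = hclass (lat w' (smul2 (pi0 ^ (j + n)) b'))" for n
  proof -
    define k where "k = j + n"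
    have pk: "pi0 ^ k \<noteq> 0" "v (pi0 ^ k) = int k" using vpow by auto
    have pin: "pi0 ^ (i + n) \<noteq> 0" "v (pi0 ^ (i + n)) = int (i + n)" using vpow by auto
    define tt where "tt = pi0 ^ k * al / de"
    have ttO: "tt \<in> Ov"
    proof (cases "al = 0")
      case True then show ?thesis unfolding tt_def by simp
    next
      case False
      have "v tt = int k + v al - v de" unfolding tt_def using False pk denz by (simp add: vdiv vmult)
      moreover have "int k \<ge> v de - v al" unfolding k_def j_def by simp
      ultimately show ?thesis unfolding O_iff vge_def by simp
    qed
    define X where "X = smul2 (pi0 ^ k * be) b"
    have "smul2 (pi0 ^ k) b' = lin 1 X tt w'" unfolding X_def tt_def b'_def w'_def m1 using denz
      by (simp add: lin_def smul2_def prod_eq_iff field_simps)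
    then have "lat w' (smul2 (pi0 ^ k) b') = lat w' X"
      using lat_shear[OF ttO, of X w'] lat_swap by metis
    also have "X = smul2 (pi0 ^ k * be / (de * pi0 ^ (i + n))) (smul2 (de * pi0 ^ (i + n)) b)"
      unfolding X_def using denz pin by (simp add: smul2_smul2)
    also have "lat w' \<dots> = lat w' (smul2 (de * pi0 ^ (i + n)) b)"
    proof (rule lat_unit2, rule unit_ratio)
      show "pi0 ^ k * be \<noteq> 0" using pk be by simp
      show "de * pi0 ^ (i + n) \<noteq> 0" using pin denz by simp
      show "v (pi0 ^ k * be) = v (de * pi0 ^ (i + n))"
        using pk pin be denz ij unfolding k_def by (simp add: vmult)
    qed
    also have "smul2 (de * pi0 ^ (i + n)) b = smul2 de (smul2 (pi0 ^ (i + n)) b)" by (simp add: smul2_smul2)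
    finally have "lat w' (smul2 (pi0 ^ k) b') = lat (smul2 de w) (smul2 de (smul2 (pi0 ^ (i + n)) b))"
      unfolding w'_def .
    then show ?thesis using hclass_lat_smul[OF denz] unfolding k_def by simp
  qed
  show ?thesis using wb' latwb key by blast
qed

lemma change:
  assumes wb: "det2 w b \<noteq> 0" and mm: "det2 m1 m2 \<noteq> 0"
  shows "\<exists>w' b' i j. det2 w' b' \<noteq> 0 \<and> lat w' b' = lat m1 m2 \<and>
      (\<forall>n. hclass (lat w (smul2 (pi0 ^ (i + n)) b)) = hclass (lat w' (smul2 (pi0 ^ (j + n)) b')))"
proof -
  define D where "D = det2 w b"
  have Dnz: "D \<noteq> 0" using wb D_def by simp
  have coord: "m = lin (det2 m b / D) w (det2 w m / D) b" for m
  proof -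
    have e: "D * fst m = det2 m b * fst w + det2 w m * fst b" "D * snd m = det2 m b * snd w + det2 w m * snd b"
      unfolding D_def by (simp_all add: det2_def algebra_simps)
    show ?thesis using e Dnz by (simp add: lin_def prod_eq_iff field_simps)
  qed
  define al1 where "al1 = det2 m1 b / D"
  define be1 where "be1 = det2 w m1 / D"
  define al2 where "al2 = det2 m2 b / D"
  define be2 where "be2 = det2 w m2 / D"
  have m1: "m1 = lin al1 w be1 b" and m2: "m2 = lin al2 w be2 b"
    using coord al1_def be1_def al2_def be2_def by auto
  have "\<not> (be1 = 0 \<and> be2 = 0)"
  proof
    assume "be1 = 0 \<and> be2 = 0"
    then have "det2 m1 m2 = 0" using m1 m2 by (simp add: det2_def lin_def)
    then show False using mm by simp
  qed
  then consider "be1 \<noteq> 0 \<and> (be2 = 0 \<or> v be1 \<le> v be2)" | "be2 \<noteq> 0 \<and> (be1 = 0 \<or> v be2 \<le> v be1)"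
    by linarith
  then show ?thesis
  proof cases
    case 1 then show ?thesis using change_aux[OF wb m1 m2 _ _ mm] by blast
  next
    case 2
    have "det2 m2 m1 \<noteq> 0" using mm det2_swap[of m1 m2] by simp
    then show ?thesis using change_aux[OF wb m2 m1] 2 lat_swap[of m1 m2] by metis
  qed
qed

end


definition minv :: "'a::field \<times> 'a \<times> 'a \<times> 'a \<Rightarrow> 'a \<times> 'a \<times> 'a \<times> 'a" where
  "minv M = (case M of (a, b, c, d) \<Rightarrow> (d / mat_det M, - b / mat_det M, - c / mat_det M, a / mat_det M))"

definition mmul :: "'a::field \<times> 'a \<times> 'a \<times> 'a \<Rightarrow> 'a \<times> 'a \<times> 'a \<times> 'a \<Rightarrow> 'a \<times> 'a \<times> 'a \<times> 'a" where
  "mmul A B = (case A of (a, b, c, d) \<Rightarrow> case B of (a', b', c', d') \<Rightarrow>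
      (a*a' + b*c', a*b' + b*d', c*a' + d*c', c*b' + d*d'))"

definition col :: "'a::field \<times> 'a \<Rightarrow> 'a \<times> 'a \<Rightarrow> 'a \<times> 'a \<times> 'a \<times> 'a" where
  "col u w = (fst u, fst w, snd u, snd w)"

lemma aux1: fixes a b c d D x y :: "'a::field"
  assumes "D = a*d - b*c" "D \<noteq> 0"
  shows "d / D * (a*x + b*y) + - b / D * (c*x + d*y) = x"
    and "- c / D * (a*x + b*y) + a / D * (c*x + d*y) = y"
    and "a * (d / D * x + - b / D * y) + b * (- c / D * x + a / D * y) = x"
    and "c * (d / D * x + - b / D * y) + d * (- c / D * x + a / D * y) = y"
proof -
  have "d * (a*x + b*y) + - b * (c*x + d*y) = D * x" "- c * (a*x + b*y) + a * (c*x + d*y) = D * y"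
    "a * (d * x + - b * y) + b * (- c * x + a * y) = D * x" "c * (d * x + - b * y) + d * (- c * x + a * y) = D * y"
    unfolding assms(1) by (simp_all add: algebra_simps)
  then show "d / D * (a*x + b*y) + - b / D * (c*x + d*y) = x"
    and "- c / D * (a*x + b*y) + a / D * (c*x + d*y) = y"
    and "a * (d / D * x + - b / D * y) + b * (- c / D * x + a / D * y) = x"
    and "c * (d / D * x + - b / D * y) + d * (- c / D * x + a / D * y) = y"
    using assms(2) by (simp_all add: add_divide_distrib[symmetric] divide_simps)
qed

lemma minv_act: assumes "mat_det M \<noteq> 0" shows "mat_act (minv M) (mat_act M u) = u"
proof -
  obtain a b c d where M: "M = (a, b, c, d)" by (cases M)
  have "a * d - b * c \<noteq> 0" using assms M by (simp add: mat_det_def)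
  note A = aux1[OF refl this, of "fst u" "snd u"]
  show ?thesis unfolding M minv_def mat_act_def mat_det_def
    by (simp only: prod.case fst_conv snd_conv A prod.collapse)
qed

lemma minv_det: "mat_det M \<noteq> 0 \<Longrightarrow> mat_det (minv M) \<noteq> 0"
proof -
  assume h: "mat_det M \<noteq> 0"
  obtain a b c d where M: "M = (a, b, c, d)" by (cases M)
  define D where "D = a * d - b * c"
  have D: "D \<noteq> 0" using h M D_def by (simp add: mat_det_def)
  have "mat_det (minv M) = d / D * (a / D) - (- b / D) * (- c / D)" unfolding M D_def
    by (simp add: minv_def mat_det_def)
  also have "\<dots> = (a * d - b * c) / (D * D)" by (simp add: field_simps diff_divide_distrib)
  also have "\<dots> = 1 / D" using D unfolding D_def by simp
  finally show ?thesis using D by simp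
qed

lemma minv_act2: assumes "mat_det M \<noteq> 0" shows "mat_act M (mat_act (minv M) u) = u"
proof -
  obtain a b c d where M: "M = (a, b, c, d)" by (cases M)
  have "a * d - b * c \<noteq> 0" using assms M by (simp add: mat_det_def)
  note A = aux1[OF refl this, of "fst u" "snd u"]
  show ?thesis unfolding M minv_def mat_act_def mat_det_def
    by (simp only: prod.case fst_conv snd_conv A prod.collapse)
qed

lemma mmul_act: "mat_act (mmul A B) u = mat_act A (mat_act B u)"
  by (cases A; cases B) (auto simp add: mmul_def mat_act_def algebra_simps)

lemma mmul_det: "mat_det (mmul A B) = mat_det A * mat_det B"
  by (cases A; cases B) (auto simp add: mmul_def mat_det_def algebra_simps)

lemma col_det: "mat_det (col u w) = det2 u w"
  by (simp add: col_def mat_det_def det2_def)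

lemma col_act1: "mat_act (col u w) (1, 0) = u" and col_act2: "mat_act (col u w) (0, 1) = w"
  by (simp_all add: col_def mat_act_def)

lemma mat_act_lin: "mat_act M (lin c a d b) = lin c (mat_act M a) d (mat_act M b)"
  by (cases M) (auto simp add: mat_act_def lin_def algebra_simps)

lemma mat_act_smul: "mat_act M (smul2 c a) = smul2 c (mat_act M a)"
  by (cases M) (auto simp add: mat_act_def smul2_def algebra_simps)

lemma mat_act_det: "det2 (mat_act M a) (mat_act M b) = mat_det M * det2 a b"
  by (cases M) (auto simp add: mat_act_def mat_det_def det2_def algebra_simps)

lemma vert_act_hclass: "vert_act M (hclass L) = hclass (mat_act M ` L)"
proof -
  have "vert_act M (hclass L) = {mat_act M ` (smul2 c ` L) | c. c \<noteq> 0}"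
    unfolding vert_act_def hclass_def by blast
  also have "\<dots> = {smul2 c ` (mat_act M ` L) | c. c \<noteq> 0}"
    by (simp add: image_image mat_act_smul)
  finally show ?thesis unfolding hclass_def .
qed

lemma vert_act_inv: "mat_det M \<noteq> 0 \<Longrightarrow> vert_act (minv M) (vert_act M x) = x"
  unfolding vert_act_def by (simp add: image_image minv_act)

lemma mat_inj: "mat_det M \<noteq> 0 \<Longrightarrow> inj (mat_act M)"
  by (metis injI minv_act)

context nalf
begin

lemma mat_lat: "mat_act M ` lat a b = lat (mat_act M a) (mat_act M b)"
proof
  show "mat_act M ` lat a b \<subseteq> lat (mat_act M a) (mat_act M b)"
  proof
    fix x assume "x \<in> mat_act M ` lat a b"
    then obtain y where "y \<in> lat a b" "x = mat_act M y" by blast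
    then obtain al be where "al \<in> Ov" "be \<in> Ov" "x = mat_act M (lin al a be b)" unfolding lat_mem by blast
    then show "x \<in> lat (mat_act M a) (mat_act M b)" using lat_memI mat_act_lin by metis
  qed
  show "lat (mat_act M a) (mat_act M b) \<subseteq> mat_act M ` lat a b"
  proof
    fix x assume "x \<in> lat (mat_act M a) (mat_act M b)"
    then obtain al be where "al \<in> Ov" "be \<in> Ov" "x = lin al (mat_act M a) be (mat_act M b)" unfolding lat_mem by blast
    then show "x \<in> mat_act M ` lat a b" using lat_memI mat_act_lin by (metis image_eqI)
  qed
qed

lemma vert_act_lat: "vert_act M (hclass (lat a b)) = hclass (lat (mat_act M a) (mat_act M b))"
  by (simp only: vert_act_hclass mat_lat)

lemma vert_act_V: assumes "mat_det M \<noteq> 0" "x \<in> tree_V v" shows "vert_act M x \<in> tree_V v"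
proof -
  obtain a b where ab: "det2 a b \<noteq> 0" "x = hclass (lat a b)" using tree_V_elim assms by blast
  moreover have "det2 (mat_act M a) (mat_act M b) \<noteq> 0" using mat_act_det[of M a b] assms(1) ab(1) by simp
  ultimately show ?thesis using tree_V_lat by (simp only: vert_act_lat)
qed

lemma vert_act_adj: assumes M: "mat_det M \<noteq> 0" and adj: "tree_adj v x y"
  shows "tree_adj v (vert_act M x) (vert_act M y)"
proof -
  obtain p L L' where h: "p \<noteq> 0" "v p = 1" "L \<in> x" "L' \<in> y" "smul2 p ` L \<subset> L'" "L' \<subset> L"
    and V: "x \<in> tree_V v" "y \<in> tree_V v"
    using adj unfolding tree_adj_def by blast
  have inj: "inj (mat_act M)" using mat_inj M .
  have "mat_act M ` L \<in> vert_act M x" "mat_act M ` L' \<in> vert_act M y"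
    using h unfolding vert_act_def by auto
  moreover have "smul2 p ` (mat_act M ` L) = mat_act M ` (smul2 p ` L)"
    by (simp add: image_image mat_act_smul)
  moreover have "mat_act M ` (smul2 p ` L) \<subset> mat_act M ` L'" "mat_act M ` L' \<subset> mat_act M ` L"
    using image_strict_mono inj h by (metis inj_on_subset top_greatest)+
  ultimately show ?thesis unfolding tree_adj_def using h V vert_act_V M by metis
qed

lemma relpow_pres: assumes M: "mat_det M \<noteq> 0"
  shows "(x, y) \<in> {(a, b). tree_adj v a b} ^^ n \<Longrightarrow>
    (vert_act M x, vert_act M y) \<in> {(a, b). tree_adj v a b} ^^ n"
proof (induction n arbitrary: y)
  case 0 then show ?case by simp
next
  case (Suc n)
  from Suc.prems obtain z where "(x, z) \<in> {(a, b). tree_adj v a b} ^^ n" "(z, y) \<in> {(a, b). tree_adj v a b}"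
    by (rule relpow_Suc_E)
  then show ?case using Suc.IH vert_act_adj[OF M] by (blast intro: relpow_Suc_I)
qed

lemma tree_d_pres: assumes M: "mat_det M \<noteq> 0"
  shows "tree_d v (vert_act M x) (vert_act M y) = tree_d v x y"
proof -
  have "(vert_act M x, vert_act M y) \<in> {(a, b). tree_adj v a b} ^^ n \<longleftrightarrow>
        (x, y) \<in> {(a, b). tree_adj v a b} ^^ n" for n
    using relpow_pres[OF M] relpow_pres[OF minv_det[OF M], of "vert_act M x" "vert_act M y"]
      vert_act_inv[OF M] by metis
  then show ?thesis unfolding tree_d_def by simp
qed

lemma vert_act_Aut: assumes M: "mat_det M \<noteq> 0" shows "vert_act M \<in> tree_Aut v"
proof -
  have "bij_betw (vert_act M) (tree_V v) (tree_V v)"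
  proof (rule bij_betw_byWitness[where f' = "vert_act (minv M)"])
    show "\<forall>a\<in>tree_V v. vert_act (minv M) (vert_act M a) = a" using vert_act_inv M by blast
    show "\<forall>a'\<in>tree_V v. vert_act M (vert_act (minv M) a') = a'"
      using vert_act_inv[OF minv_det[OF M]] minv_act2[OF M]
      unfolding vert_act_def by (simp add: image_image)
    show "vert_act M ` tree_V v \<subseteq> tree_V v" using vert_act_V M by blast
    show "vert_act (minv M) ` tree_V v \<subseteq> tree_V v" using vert_act_V minv_det M by blast
  qed
  then show ?thesis unfolding tree_Aut_def using tree_d_pres M by blast
qed

lemma vert_act_Ghat: assumes M: "mat_det M \<noteq> 0" shows "vert_act M \<in> Ghat v e"
  unfolding Ghat_def PGL2_tree_def using vert_act_Aut[OF M] M by blast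

end


context nalf
begin

lemma ray_rel:
  assumes ray: "tree_ray v y" and mm: "det2 m1 m2 \<noteq> 0"
  shows "\<exists>w b i j. det2 w b \<noteq> 0 \<and> lat w b = lat m1 m2 \<and>
     (\<forall>n. y (i + n) = hclass (lat w (smul2 (pi0 ^ (j + n)) b)))"
proof -
  obtain w b where wb: "det2 w b \<noteq> 0" "\<forall>k. y k = hclass (lat w (smul2 (pi0 ^ k) b))"
    using ray_normal[OF ray] by blast
  obtain w' b' i j where h: "det2 w' b' \<noteq> 0" "lat w' b' = lat m1 m2"
    "\<forall>n. hclass (lat w (smul2 (pi0 ^ (i + n)) b)) = hclass (lat w' (smul2 (pi0 ^ (j + n)) b'))"
    using change[OF wb(1) mm] by blast
  then show ?thesis using wb(2) by metis
qed

lemma main: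
  assumes x0: "x0 \<in> tree_V v" and y: "tree_ray v y" and z: "tree_ray v z"
  shows "\<exists>g\<in>Ghat v e. g x0 = x0 \<and> same_end (g \<circ> y) z"
proof -
  obtain m1 m2 where mm: "det2 m1 m2 \<noteq> 0" "x0 = hclass (lat m1 m2)" using tree_V_elim[OF x0] by blast
  obtain w1 b1 i1 j1 where Y: "det2 w1 b1 \<noteq> 0" "lat w1 b1 = lat m1 m2"
      "\<forall>n. y (i1 + n) = hclass (lat w1 (smul2 (pi0 ^ (j1 + n)) b1))"
    using ray_rel[OF y mm(1)] by blast
  obtain w2 b2 i2 j2 where Z: "det2 w2 b2 \<noteq> 0" "lat w2 b2 = lat m1 m2"
      "\<forall>n. z (i2 + n) = hclass (lat w2 (smul2 (pi0 ^ (j2 + n)) b2))"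
    using ray_rel[OF z mm(1)] by blast
  define C1 where "C1 = col w1 b1"
  define M where "M = mmul (col w2 b2) (minv C1)"
  have C1: "mat_det C1 \<noteq> 0" using Y(1) C1_def by (simp add: col_det)
  have Mdet: "mat_det M \<noteq> 0" unfolding M_def using Z(1) minv_det[OF C1] by (simp add: mmul_det col_det)
  have Mw: "mat_act M w1 = w2"
  proof -
    have "mat_act (minv C1) w1 = (1, 0)" using minv_act[OF C1, of "(1,0)"] C1_def by (simp add: col_act1)
    then show ?thesis unfolding M_def by (simp add: mmul_act col_act1)
  qed
  have Mb: "mat_act M b1 = b2"
  proof -
    have "mat_act (minv C1) b1 = (0, 1)" using minv_act[OF C1, of "(0,1)"] C1_def by (simp add: col_act2)
    then show ?thesis unfolding M_def by (simp add: mmul_act col_act2)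
  qed
  define g where "g = vert_act M"
  have gG: "g \<in> Ghat v e" unfolding g_def using vert_act_Ghat[OF Mdet] .
  have gx0: "g x0 = x0"
  proof -
    have "x0 = hclass (lat w1 b1)" using mm Y by simp
    then have "g x0 = hclass (lat w2 b2)" unfolding g_def using Mw Mb by (simp add: vert_act_lat)
    then show ?thesis using Z mm by simp
  qed
  have gy: "g (y (i1 + n)) = hclass (lat w2 (smul2 (pi0 ^ (j1 + n)) b2))" for n
    using Y(3) Mw Mb unfolding g_def by (simp add: vert_act_lat mat_act_smul)
  have "same_end (g \<circ> y) z"
    unfolding same_end_def
  proof (intro exI allI)
    fix n
    have "(g \<circ> y) (i1 + (j2 - j1) + n) = g (y (i1 + ((j2 - j1) + n)))" by (simp add: add.assoc)
    also have "\<dots> = hclass (lat w2 (smul2 (pi0 ^ (j1 + ((j2 - j1) + n))) b2))" using gy .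
    also have "j1 + ((j2 - j1) + n) = j2 + ((j1 - j2) + n)" by simp
    also have "hclass (lat w2 (smul2 (pi0 ^ (j2 + ((j1 - j2) + n))) b2)) = z (i2 + ((j1 - j2) + n))"
      using Z(3) by simp
    also have "\<dots> = z (i2 + (j1 - j2) + n)" by (simp add: add.assoc)
    finally show "(g \<circ> y) (i1 + (j2 - j1) + n) = z (i2 + (j1 - j2) + n)" .
  qed
  then show ?thesis using gG gx0 by blast
qed

end

theorem mainTheorem8:
  fixes v :: "'a::field \<Rightarrow> int" and e :: nat and x0 :: "('a \<times> 'a) set set"
  assumes "nonarch_local_field v"
    and "1 \<le> e"
    and "x0 \<in> tree_V v"
  shows "\<forall>y z. tree_ray v y \<longrightarrow> tree_ray v z \<longrightarrow>
           (\<exists>g\<in>Ghat v e. g x0 = x0 \<and> same_end (g \<circ> y) z)"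
proof -
  interpret nalf v using assms(1) by (unfold_locales)
  show ?thesis using main assms(3) by blast
qed


end
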